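(* In the bootstrap setting, let $|\alpha|+|\beta|+|\sigma|\le10$. For every $\eta>0$ there is $C_\eta>0$ (depending on $\eta,d_0,\gamma$) such that for every $T\in[0,T_{\mathrm{boot}})$, $$T^{\alpha,\beta,\sigma}_1\le\eta\big\|(1+t)^{-\frac{1+\delta}2}\langle v\rangle^{\frac12}W_{\alpha,\beta,\sigma}D^{\alpha,\beta,\sigma}g\big\|^2_{L^2([0,T];L^2_xL^2_v)}+C_\eta(1+T)^{2(1+\delta)}\sum_{\substack{|\alpha'|\le|\alpha|+1\\|\beta'|\le|\beta|-1}}\big\|(1+t)^{-\frac{1+\delta}2}\langle v\rangle^{\frac12}W_{\alpha',\beta',\sigma}D^{\alpha',\beta',\sigma}g\big\|^2_{L^2([0,T];L^2_xL^2_v)},$$ where $$T^{\alpha,\beta,\sigma}_1:=\sum_{\substack{|\alpha'|\le|\alpha|+1\\|\beta'|\le|\beta|-1}}\big\|W^2_{\alpha,\beta,\sigma}|D^{\alpha,\beta,\sigma}g|\,|D^{\alpha',\beta',\sigma}g|\big\|_{L^1([0,T];L^1_xL^1_v)}.$$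
   Context: Notation: $\langle z\rangle=\sqrt{1+|z|^2}$; repeated lower-case indices summed over $\{1,2,3\}$. Multi-indices $\alpha,\beta,\sigma\in(\mathbb N\cup\{0\})^3$ with $|\alpha|=\sum\alpha_l$; sums over primed multi-indices run over all multi-indices satisfying the displayed constraints. $D^{\alpha,\beta,\sigma}=\partial_x^\alpha\partial_v^\beta Y^\sigma$ with $Y^\sigma=\prod_lY_l^{\sigma_l}$, $Y_l=(t+1)\partial_{x_l}+\partial_{v_l}$. $\nu_{\alpha,\beta,\sigma}=20-\frac32(|\alpha|+|\sigma|)-\frac12|\beta|$, $\omega_{\alpha,\beta,\sigma}=20-\frac32|\sigma|-\frac12(|\alpha|+|\beta|)$, $W_{\alpha,\beta,\sigma}=\langle v\rangle^{\nu_{\alpha,\beta,\sigma}}\langle x-(t+1)v\rangle^{\omega_{\alpha,\beta,\sigma}}$. Mixed norms take $v$ first, then $x$, then $t$. Bootstrap setting: fix $\gamma\in[0,1)$, $d_0>0$, $\delta\in(0,\frac18)$; $a_{ij}(z)=(\delta_{ij}-z_iz_j/|z|^2)|z|^{\gamma+2}$, $c=\partial^2_{z_iz_j}a_{ij}$, $\bar a_{ij}=\int a_{ij}(v-v_* )f(t,x,v_* )dv_*$, $\bar c=\int c(v-v_* )f(t,x,v_* )dv_*$; Landau equation $\partial_tf+v_i\partial_{x_i}f=\bar a_{ij}\partial^2_{v_iv_j}f-\bar cf$; $d(t)=d_0(1+(1+t)^{-\delta})$. Energy norm for $T>0$: $\|h\|^2_{E_T}=\sum_{|\alpha|+|\beta|+|\sigma|\le10}(1+T)^{-|\beta|(1+\delta)}\big(\|W_{\alpha,\beta,\sigma}D^{\alpha,\beta,\sigma}h\|^2_{L^\infty([0,T);L^2_xL^2_v)}+\|\langle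 v\rangle^{1/2}W_{\alpha,\beta,\sigma}D^{\alpha,\beta,\sigma}h\|^2_{L^2([0,T);L^2_xL^2_v)}\big)$. $\epsilon_0=\epsilon_0(d_0,\gamma)>0$ is a fixed sufficiently small constant, $\epsilon\in[0,\epsilon_0]$, and $f_{\mathrm{ini}}$ satisfies $\sum_{|\alpha|+|\beta|+|\sigma|\le10}\|\langle v\rangle^{20-\frac32|\alpha|-\frac12|\beta|-\frac32|\sigma|}\langle x-v\rangle^{20-\frac32|\sigma|-\frac12|\beta|-\frac12|\alpha|}\partial_x^\alpha\partial_v^\beta(\partial_x+\partial_v)^\sigma(e^{2d_0\langle v\rangle}f_{\mathrm{ini}})\|^2_{L^2_xL^2_v}<\epsilon$. $T_{\mathrm{boot}}>0$ and $f:[0,T_{\mathrm{boot}})\times\mathbb R^3\times\mathbb R^3\to\mathbb R$ is a (sufficiently regular) solution of the Landau equation with $f\ge0$, $f(0)=f_{\mathrm{ini}}$; $g=e^{d(t)\langle v\rangle}f$; and $\|g\|_{E_T}\le\epsilon^{3/4}$ for all $T\in[0,T_{\mathrm{boot}})$. $A\lesssim B$ means $A\le CB$ with $C$ depending only on $d_0,\gamma$. *)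

theory Defs
  imports "HOL-Analysis.Analysis" "HOL-Probability.Essential_Supremum"
begin

definition jb :: "real^3 \<Rightarrow> real" where
  "jb z = sqrt (1 + (norm z)\<^sup>2)"

definition mlen :: "nat^3 \<Rightarrow> nat" where
  "mlen a = (\<Sum>l\<in>UNIV. a $ l)"

definition dz :: "3 \<Rightarrow> (real^3 \<Rightarrow> real) \<Rightarrow> real^3 \<Rightarrow> real" where
  "dz l F z = deriv (\<lambda>s. F (z + s *\<^sub>R axis l 1)) 0"

definition dxs :: "3 \<Rightarrow> (real^3 \<Rightarrow> real^3 \<Rightarrow> real) \<Rightarrow> real^3 \<Rightarrow> real^3 \<Rightarrow> real" where
  "dxs l F x v = deriv (\<lambda>s. F (x + s *\<^sub>R axis l 1) v) 0"

definition dvs :: "3 \<Rightarrow> (real^3 \<Rightarrow> real^3 \<Rightarrow> real) \<Rightarrow> real^3 \<Rightarrow> real^3 \<Rightarrow> real" where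
  "dvs l F x v = deriv (\<lambda>s. F x (v + s *\<^sub>R axis l 1)) 0"

datatype dir = Dt | Dx 3 | Dv 3

fun pdir :: "dir \<Rightarrow> (real \<Rightarrow> real^3 \<Rightarrow> real^3 \<Rightarrow> real) \<Rightarrow> real \<Rightarrow> real^3 \<Rightarrow> real^3 \<Rightarrow> real" where
  "pdir Dt h = (\<lambda>t x v. deriv (\<lambda>s. h s x v) t)"
| "pdir (Dx l) h = (\<lambda>t. dxs l (h t))"
| "pdir (Dv l) h = (\<lambda>t. dvs l (h t))"

definition applyD :: "dir list \<Rightarrow> (real \<Rightarrow> real^3 \<Rightarrow> real^3 \<Rightarrow> real) \<Rightarrow> real \<Rightarrow> real^3 \<Rightarrow> real^3 \<Rightarrow> real" where
  "applyD ds h = foldr pdir ds h"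

fun slice_diff :: "dir \<Rightarrow> (real \<Rightarrow> real^3 \<Rightarrow> real^3 \<Rightarrow> real) \<Rightarrow> real \<Rightarrow> real^3 \<Rightarrow> real^3 \<Rightarrow> bool" where
  "slice_diff Dt h t x v = ((\<lambda>s. h s x v) differentiable (at t))"
| "slice_diff (Dx l) h t x v = ((\<lambda>s. h t (x + s *\<^sub>R axis l 1) v) differentiable (at 0))"
| "slice_diff (Dv l) h t x v = ((\<lambda>s. h t x (v + s *\<^sub>R axis l 1)) differentiable (at 0))"

text \<open>"Sufficiently regular" on [0,Tb) x R^3 x R^3: all partial derivatives of all orders
  exist and are continuous in the interior (0,Tb) x R^6 (i.e. h is C^infinity there), and all
  partial derivatives in x and v of all orders exist and are continuous up to t = 0.\<close>
definition regular :: "real \<Rightarrow> (real \<Rightarrow> real^3 \<Rightarrow> real^3 \<Rightarrow> real) \<Rightarrow> bool" where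
  "regular Tb h \<longleftrightarrow>
     (\<forall>ds. continuous_on ({0<..<Tb} \<times> (UNIV :: ((real^3) \<times> (real^3)) set))
              (\<lambda>p. applyD ds h (fst p) (fst (snd p)) (snd (snd p)))) \<and>
     (\<forall>ds d t x v. 0 < t \<and> t < Tb \<longrightarrow> slice_diff d (applyD ds h) t x v) \<and>
     (\<forall>ds. Dt \<notin> set ds \<longrightarrow> continuous_on ({0..<Tb} \<times> (UNIV :: ((real^3) \<times> (real^3)) set))
              (\<lambda>p. applyD ds h (fst p) (fst (snd p)) (snd (snd p)))) \<and>
     (\<forall>ds d t x v. Dt \<notin> set ds \<and> d \<noteq> Dt \<and> 0 \<le> t \<and> t < Tb \<longrightarrow> slice_diff d (applyD ds h) t x v)"

definition mop :: "(3 \<Rightarrow> 'f \<Rightarrow> 'f) \<Rightarrow> nat^3 \<Rightarrow> 'f \<Rightarrow> 'f" where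
  "mop P a F = (P 1 ^^ (a $ 1)) ((P 2 ^^ (a $ 2)) ((P 3 ^^ (a $ 3)) F))"

definition Yop :: "3 \<Rightarrow> (real \<Rightarrow> real^3 \<Rightarrow> real^3 \<Rightarrow> real) \<Rightarrow> real \<Rightarrow> real^3 \<Rightarrow> real^3 \<Rightarrow> real" where
  "Yop l h = (\<lambda>t x v. (t + 1) * pdir (Dx l) h t x v + pdir (Dv l) h t x v)"

definition Dop :: "nat^3 \<Rightarrow> nat^3 \<Rightarrow> nat^3 \<Rightarrow> (real \<Rightarrow> real^3 \<Rightarrow> real^3 \<Rightarrow> real) \<Rightarrow> real \<Rightarrow> real^3 \<Rightarrow> real^3 \<Rightarrow> real" where
  "Dop a b s h = mop (\<lambda>l. pdir (Dx l)) a (mop (\<lambda>l. pdir (Dv l)) b (mop Yop s h))"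

definition Zs :: "3 \<Rightarrow> (real^3 \<Rightarrow> real^3 \<Rightarrow> real) \<Rightarrow> real^3 \<Rightarrow> real^3 \<Rightarrow> real" where
  "Zs l F = (\<lambda>x v. dxs l F x v + dvs l F x v)"

definition Dini :: "nat^3 \<Rightarrow> nat^3 \<Rightarrow> nat^3 \<Rightarrow> (real^3 \<Rightarrow> real^3 \<Rightarrow> real) \<Rightarrow> real^3 \<Rightarrow> real^3 \<Rightarrow> real" where
  "Dini a b s F = mop dxs a (mop dvs b (mop Zs s F))"

definition nu :: "nat^3 \<Rightarrow> nat^3 \<Rightarrow> nat^3 \<Rightarrow> real" where
  "nu a b s = 20 - 3/2 * (real (mlen a) + real (mlen s)) - 1/2 * real (mlen b)"

definition om :: "nat^3 \<Rightarrow> nat^3 \<Rightarrow> nat^3 \<Rightarrow> real" where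
  "om a b s = 20 - 3/2 * real (mlen s) - 1/2 * (real (mlen a) + real (mlen b))"

definition W :: "nat^3 \<Rightarrow> nat^3 \<Rightarrow> nat^3 \<Rightarrow> real \<Rightarrow> real^3 \<Rightarrow> real^3 \<Rightarrow> real" where
  "W a b s t x v = jb v powr nu a b s * jb (x - (t + 1) *\<^sub>R v) powr om a b s"

definition sq_xv :: "(real^3 \<Rightarrow> real^3 \<Rightarrow> real) \<Rightarrow> ennreal" where
  "sq_xv F = (\<integral>\<^sup>+ x. (\<integral>\<^sup>+ v. ennreal ((F x v)\<^sup>2) \<partial>lborel) \<partial>lborel)"

definition sq_txv :: "real set \<Rightarrow> (real \<Rightarrow> real^3 \<Rightarrow> real^3 \<Rightarrow> real) \<Rightarrow> ennreal" where
  "sq_txv I h = (\<integral>\<^sup>+ t. indicator I t * sq_xv (h t) \<partial>lborel)"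

definition L1_txv :: "real set \<Rightarrow> (real \<Rightarrow> real^3 \<Rightarrow> real^3 \<Rightarrow> real) \<Rightarrow> ennreal" where
  "L1_txv I h = (\<integral>\<^sup>+ t. indicator I t *
       (\<integral>\<^sup>+ x. (\<integral>\<^sup>+ v. ennreal \<bar>h t x v\<bar> \<partial>lborel) \<partial>lborel) \<partial>lborel)"

definition idx10 :: "((nat^3) \<times> (nat^3) \<times> (nat^3)) set" where
  "idx10 = {(a, b, s). mlen a + mlen b + mlen s \<le> 10}"

definition Enorm2 :: "real \<Rightarrow> real \<Rightarrow> (real \<Rightarrow> real^3 \<Rightarrow> real^3 \<Rightarrow> real) \<Rightarrow> ennreal" where
  "Enorm2 \<delta> T h = (\<Sum>(a, b, s)\<in>idx10.
      ennreal ((1 + T) powr (- real (mlen b) * (1 + \<delta>))) *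
      (esssup (restrict_space lborel {0..<T})
          (\<lambda>t. sq_xv (\<lambda>x v. W a b s t x v * Dop a b s h t x v))
       + sq_txv {0..<T} (\<lambda>t x v. jb v powr (1/2) * W a b s t x v * Dop a b s h t x v)))"

definition acoef :: "real \<Rightarrow> 3 \<Rightarrow> 3 \<Rightarrow> real^3 \<Rightarrow> real" where
  "acoef \<gamma> i j z = ((if i = j then 1 else 0) - z $ i * z $ j / (norm z)\<^sup>2) * norm z powr (\<gamma> + 2)"

definition ccoef :: "real \<Rightarrow> real^3 \<Rightarrow> real" where
  "ccoef \<gamma> z = (\<Sum>i\<in>UNIV. \<Sum>j\<in>UNIV. dz i (dz j (acoef \<gamma> i j)) z)"

definition abar :: "real \<Rightarrow> (real \<Rightarrow> real^3 \<Rightarrow> real^3 \<Rightarrow> real) \<Rightarrow> 3 \<Rightarrow> 3 \<Rightarrow> real \<Rightarrow> real^3 \<Rightarrow> real^3 \<Rightarrow> real" where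
  "abar \<gamma> f i j t x v = (\<integral>w. acoef \<gamma> i j (v - w) * f t x w \<partial>lborel)"

definition cbar :: "real \<Rightarrow> (real \<Rightarrow> real^3 \<Rightarrow> real^3 \<Rightarrow> real) \<Rightarrow> real \<Rightarrow> real^3 \<Rightarrow> real^3 \<Rightarrow> real" where
  "cbar \<gamma> f t x v = (\<integral>w. ccoef \<gamma> (v - w) * f t x w \<partial>lborel)"

definition landau_solution :: "real \<Rightarrow> real \<Rightarrow> (real \<Rightarrow> real^3 \<Rightarrow> real^3 \<Rightarrow> real) \<Rightarrow> bool" where
  "landau_solution \<gamma> Tb f \<longleftrightarrow>
     regular Tb f \<and>
     (\<forall>t x v. 0 \<le> t \<and> t < Tb \<longrightarrow>
        (\<forall>i j. integrable lborel (\<lambda>w. acoef \<gamma> i j (v - w) * f t x w)) \<and>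
        integrable lborel (\<lambda>w. ccoef \<gamma> (v - w) * f t x w)) \<and>
     (\<forall>t x v. 0 < t \<and> t < Tb \<longrightarrow>
        pdir Dt f t x v + (\<Sum>i\<in>UNIV. v $ i * pdir (Dx i) f t x v)
          = (\<Sum>i\<in>UNIV. \<Sum>j\<in>UNIV. abar \<gamma> f i j t x v * pdir (Dv i) (pdir (Dv j) f) t x v)
            - cbar \<gamma> f t x v * f t x v)"

definition dfun :: "real \<Rightarrow> real \<Rightarrow> real \<Rightarrow> real" where
  "dfun d0 \<delta> t = d0 * (1 + (1 + t) powr (- \<delta>))"

definition gfun :: "real \<Rightarrow> real \<Rightarrow> (real \<Rightarrow> real^3 \<Rightarrow> real^3 \<Rightarrow> real) \<Rightarrow> real \<Rightarrow> real^3 \<Rightarrow> real^3 \<Rightarrow> real" where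
  "gfun d0 \<delta> f t x v = exp (dfun d0 \<delta> t * jb v) * f t x v"

definition init_small :: "real \<Rightarrow> real \<Rightarrow> (real^3 \<Rightarrow> real^3 \<Rightarrow> real) \<Rightarrow> bool" where
  "init_small d0 \<epsilon> fini \<longleftrightarrow>
     (\<Sum>(a, b, s)\<in>idx10.
        sq_xv (\<lambda>x v. jb v powr (20 - 3/2 * real (mlen a) - 1/2 * real (mlen b) - 3/2 * real (mlen s))
                   * jb (x - v) powr (20 - 3/2 * real (mlen s) - 1/2 * real (mlen b) - 1/2 * real (mlen a))
                   * Dini a b s (\<lambda>x v. exp (2 * d0 * jb v) * fini x v) x v))
     < ennreal \<epsilon>"

definition bootstrap :: "real \<Rightarrow> real \<Rightarrow> real \<Rightarrow> real \<Rightarrow> real \<Rightarrow> (real^3 \<Rightarrow> real^3 \<Rightarrow> real)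
    \<Rightarrow> real \<Rightarrow> (real \<Rightarrow> real^3 \<Rightarrow> real^3 \<Rightarrow> real) \<Rightarrow> bool" where
  "bootstrap \<gamma> d0 \<delta> \<epsilon>0 \<epsilon> fini Tb f \<longleftrightarrow>
     0 \<le> \<gamma> \<and> \<gamma> < 1 \<and> 0 < d0 \<and> 0 < \<delta> \<and> \<delta> < 1/8 \<and>
     0 \<le> \<epsilon> \<and> \<epsilon> \<le> \<epsilon>0 \<and> init_small d0 \<epsilon> fini \<and>
     0 < Tb \<and> landau_solution \<gamma> Tb f \<and>
     (\<forall>t x v. 0 \<le> t \<and> t < Tb \<longrightarrow> f t x v \<ge> 0) \<and>
     (\<forall>x v. f 0 x v = fini x v) \<and>
     (\<forall>T. 0 \<le> T \<and> T < Tb \<longrightarrow> Enorm2 \<delta> T (gfun d0 \<delta> f) \<le> ennreal ((\<epsilon> powr (3/4))\<^sup>2))"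

end

theory Submission
  imports Defs
begin

lemma meas3:
  fixes F :: "real \<Rightarrow> real^3 \<Rightarrow> real^3 \<Rightarrow> ennreal"
  assumes "(\<lambda>p. F (fst p) (fst (snd p)) (snd (snd p))) \<in> borel_measurable borel"
  shows "(\<lambda>p. F (fst p) (fst (snd p)) (snd (snd p))) \<in> borel_measurable (lborel \<Otimes>\<^sub>M (lborel \<Otimes>\<^sub>M lborel))"
proof -
  have "sets (lborel \<Otimes>\<^sub>M (lborel \<Otimes>\<^sub>M lborel)) = sets (borel :: (real \<times> (real^3) \<times> (real^3)) measure)"
  proof -
    have "sets (lborel \<Otimes>\<^sub>M (lborel \<Otimes>\<^sub>M lborel)) = sets ((borel::real measure) \<Otimes>\<^sub>M ((borel::(real^3) measure) \<Otimes>\<^sub>M (borel::(real^3) measure)))"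
      by (intro sets_pair_measure_cong sets_lborel)
    also have "\<dots> = sets (borel :: (real \<times> (real^3) \<times> (real^3)) measure)"
      by (simp only: borel_prod)
    finally show ?thesis .
  qed
  from measurable_cong_sets[OF this refl, where N="borel::ennreal measure"]
  show ?thesis using assms by (simp only:)
qed

lemma meas3b:
  fixes F :: "real \<Rightarrow> real^3 \<Rightarrow> real^3 \<Rightarrow> ennreal"
  assumes "(\<lambda>p. F (fst p) (fst (snd p)) (snd (snd p))) \<in> borel_measurable borel"
  shows "(\<lambda>q. F (fst (fst q)) (snd (fst q)) (snd q)) \<in> borel_measurable ((lborel \<Otimes>\<^sub>M lborel) \<Otimes>\<^sub>M lborel)"
proof -
  have c: "(\<lambda>q::(real \<times> (real^3)) \<times> (real^3). (fst (fst q), snd (fst q), snd q)) \<in> borel_measurable borel"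
    by (intro borel_measurable_continuous_onI continuous_intros)
  have m: "(\<lambda>q::(real \<times> (real^3)) \<times> (real^3). F (fst (fst q)) (snd (fst q)) (snd q)) \<in> borel_measurable borel"
    using measurable_compose[OF c assms] by (simp add: o_def)
  have "sets ((lborel \<Otimes>\<^sub>M lborel) \<Otimes>\<^sub>M lborel) = sets ((borel \<Otimes>\<^sub>M borel) \<Otimes>\<^sub>M (borel :: (real^3) measure))"
    by (intro sets_pair_measure_cong sets_lborel)
  also have "\<dots> = sets (borel :: ((real \<times> (real^3)) \<times> (real^3)) measure)"
    by (simp only: borel_prod)
  finally have "sets ((lborel \<Otimes>\<^sub>M lborel) \<Otimes>\<^sub>M lborel) = sets (borel :: ((real \<times> (real^3)) \<times> (real^3)) measure)" .
  from measurable_cong_sets[OF this refl, where N="borel::ennreal measure"]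
  show ?thesis using m by (simp only:)
qed

lemma gen3:
  fixes H :: "real \<Rightarrow> real^3 \<Rightarrow> real^3 \<Rightarrow> ennreal"
  assumes mH: "(\<lambda>p. H (fst p) (fst (snd p)) (snd (snd p))) \<in> borel_measurable borel"
  shows "(\<lambda>v. H t x v) \<in> borel_measurable lborel"
     "(\<lambda>x. \<integral>\<^sup>+v. H t x v \<partial>lborel) \<in> borel_measurable lborel"
     "(\<lambda>t. \<integral>\<^sup>+x. \<integral>\<^sup>+v. H t x v \<partial>lborel \<partial>lborel) \<in> borel_measurable lborel"
proof -
    have H1: "(\<lambda>p. H (fst p) (fst (snd p)) (snd (snd p))) \<in> borel_measurable (lborel \<Otimes>\<^sub>M (lborel \<Otimes>\<^sub>M lborel))"
      by (rule meas3[OF mH])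
    have H2: "(\<lambda>y. H t (fst y) (snd y)) \<in> borel_measurable (lborel \<Otimes>\<^sub>M lborel)"
      using measurable_compose_Pair1[OF _ H1, of t] by simp
    have H3: "(\<lambda>v. H t x v) \<in> borel_measurable lborel"
      using measurable_compose_Pair1[OF _ H2, of x] by simp
    show "(\<lambda>v. H t x v) \<in> borel_measurable lborel" by (rule H3)
    show "(\<lambda>x. \<integral>\<^sup>+v. H t x v \<partial>lborel) \<in> borel_measurable lborel"
      using lborel.borel_measurable_nn_integral[of "\<lambda>x v. H t x v" lborel] H2
      by (simp add: case_prod_beta')
    have H4: "(\<lambda>q. H (fst (fst q)) (snd (fst q)) (snd q)) \<in> borel_measurable ((lborel \<Otimes>\<^sub>M lborel) \<Otimes>\<^sub>M lborel)"
      by (rule meas3b[OF mH])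
    have H5: "(\<lambda>q. \<integral>\<^sup>+v. H (fst q) (snd q) v \<partial>lborel) \<in> borel_measurable (lborel \<Otimes>\<^sub>M lborel)"
      using lborel.borel_measurable_nn_integral[of "\<lambda>q v. H (fst q) (snd q) v" "lborel \<Otimes>\<^sub>M lborel"] H4
      by (simp add: case_prod_beta')
    show "(\<lambda>t. \<integral>\<^sup>+x. \<integral>\<^sup>+v. H t x v \<partial>lborel \<partial>lborel) \<in> borel_measurable lborel"
      using lborel.borel_measurable_nn_integral[of "\<lambda>t x. \<integral>\<^sup>+v. H t x v \<partial>lborel" lborel] H5
      by (simp add: case_prod_beta')
qed

lemma split3:
  fixes F G :: "real \<Rightarrow> real^3 \<Rightarrow> real^3 \<Rightarrow> ennreal"
  assumes mF: "(\<lambda>p. F (fst p) (fst (snd p)) (snd (snd p))) \<in> borel_measurable borel"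
  assumes mG: "(\<lambda>p. G (fst p) (fst (snd p)) (snd (snd p))) \<in> borel_measurable borel"
  shows "(\<integral>\<^sup>+t. \<integral>\<^sup>+x. \<integral>\<^sup>+v. c * F t x v + d * G t x v \<partial>lborel \<partial>lborel \<partial>lborel)
       = c * (\<integral>\<^sup>+t. \<integral>\<^sup>+x. \<integral>\<^sup>+v. F t x v \<partial>lborel \<partial>lborel \<partial>lborel)
         + d * (\<integral>\<^sup>+t. \<integral>\<^sup>+x. \<integral>\<^sup>+v. G t x v \<partial>lborel \<partial>lborel \<partial>lborel)"
proof -
  note F1 = gen3(1)[OF mF] and F2 = gen3(2)[OF mF] and F3 = gen3(3)[OF mF]
  note G1 = gen3(1)[OF mG] and G2 = gen3(2)[OF mG] and G3 = gen3(3)[OF mG]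
  have s1: "(\<integral>\<^sup>+v. c * F t x v + d * G t x v \<partial>lborel) = c * (\<integral>\<^sup>+v. F t x v \<partial>lborel) + d * (\<integral>\<^sup>+v. G t x v \<partial>lborel)" for t x
  proof -
    have "(\<integral>\<^sup>+v. c * F t x v + d * G t x v \<partial>lborel) = (\<integral>\<^sup>+v. c * F t x v \<partial>lborel) + (\<integral>\<^sup>+v. d * G t x v \<partial>lborel)"
      by (rule nn_integral_add) (intro borel_measurable_times_ennreal borel_measurable_const F1 G1)+
    also have "\<dots> = c * (\<integral>\<^sup>+v. F t x v \<partial>lborel) + d * (\<integral>\<^sup>+v. G t x v \<partial>lborel)"
      by (simp only: nn_integral_cmult[OF F1] nn_integral_cmult[OF G1])
    finally show ?thesis .
  qed
  have s2: "(\<integral>\<^sup>+x. \<integral>\<^sup>+v. c * F t x v + d * G t x v \<partial>lborel \<partial>lborel) = c * (\<integral>\<^sup>+x. \<integral>\<^sup>+v. F t x v \<partial>lborel \<partial>lborel) + d * (\<integral>\<^sup>+x. \<integral>\<^sup>+v. G t x v \<partial>lborel \<partial>lborel)" for t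
  proof -
    have "(\<integral>\<^sup>+x. \<integral>\<^sup>+v. c * F t x v + d * G t x v \<partial>lborel \<partial>lborel) = (\<integral>\<^sup>+x. c * (\<integral>\<^sup>+v. F t x v \<partial>lborel) + d * (\<integral>\<^sup>+v. G t x v \<partial>lborel) \<partial>lborel)"
      by (simp only: s1)
    also have "\<dots> = (\<integral>\<^sup>+x. c * (\<integral>\<^sup>+v. F t x v \<partial>lborel) \<partial>lborel) + (\<integral>\<^sup>+x. d * (\<integral>\<^sup>+v. G t x v \<partial>lborel) \<partial>lborel)"
      by (rule nn_integral_add) (intro borel_measurable_times_ennreal borel_measurable_const F2 G2)+
    also have "\<dots> = c * (\<integral>\<^sup>+x. \<integral>\<^sup>+v. F t x v \<partial>lborel \<partial>lborel) + d * (\<integral>\<^sup>+x. \<integral>\<^sup>+v. G t x v \<partial>lborel \<partial>lborel)"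
      by (simp only: nn_integral_cmult[OF F2] nn_integral_cmult[OF G2])
    finally show ?thesis .
  qed
  have "(\<integral>\<^sup>+t. \<integral>\<^sup>+x. \<integral>\<^sup>+v. c * F t x v + d * G t x v \<partial>lborel \<partial>lborel \<partial>lborel)
     = (\<integral>\<^sup>+t. c * (\<integral>\<^sup>+x. \<integral>\<^sup>+v. F t x v \<partial>lborel \<partial>lborel) + d * (\<integral>\<^sup>+x. \<integral>\<^sup>+v. G t x v \<partial>lborel \<partial>lborel) \<partial>lborel)"
    by (simp only: s2)
  also have "\<dots> = (\<integral>\<^sup>+t. c * (\<integral>\<^sup>+x. \<integral>\<^sup>+v. F t x v \<partial>lborel \<partial>lborel) \<partial>lborel) + (\<integral>\<^sup>+t. d * (\<integral>\<^sup>+x. \<integral>\<^sup>+v. G t x v \<partial>lborel \<partial>lborel) \<partial>lborel)"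
    by (rule nn_integral_add) (intro borel_measurable_times_ennreal borel_measurable_const F3 G3)+
  also have "\<dots> = c * (\<integral>\<^sup>+t. \<integral>\<^sup>+x. \<integral>\<^sup>+v. F t x v \<partial>lborel \<partial>lborel \<partial>lborel)
         + d * (\<integral>\<^sup>+t. \<integral>\<^sup>+x. \<integral>\<^sup>+v. G t x v \<partial>lborel \<partial>lborel \<partial>lborel)"
    by (simp only: nn_integral_cmult[OF F3] nn_integral_cmult[OF G3])
  finally show ?thesis .
qed


definition unc :: "(real \<Rightarrow> real^3 \<Rightarrow> real^3 \<Rightarrow> real) \<Rightarrow> real \<times> (real^3) \<times> (real^3) \<Rightarrow> real" where
  "unc h p = h (fst p) (fst (snd p)) (snd (snd p))"

definition RG :: "real \<Rightarrow> (real \<times> (real^3) \<times> (real^3)) set" where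
  "RG Tb = {0..<Tb} \<times> UNIV"

definition sl :: "dir \<Rightarrow> (real \<Rightarrow> real^3 \<Rightarrow> real^3 \<Rightarrow> real) \<Rightarrow> real \<Rightarrow> real^3 \<Rightarrow> real^3 \<Rightarrow> real \<Rightarrow> real" where
  "sl d h t x v = (case d of Dt \<Rightarrow> (\<lambda>s. h s x v)
      | Dx l \<Rightarrow> (\<lambda>s. h t (x + s *\<^sub>R axis l 1) v)
      | Dv l \<Rightarrow> (\<lambda>s. h t x (v + s *\<^sub>R axis l 1)))"

definition good :: "real \<Rightarrow> (real \<Rightarrow> real^3 \<Rightarrow> real^3 \<Rightarrow> real) \<Rightarrow> bool" where
  "good Tb h \<longleftrightarrow> (\<lambda>p. indicator (RG Tb) p * unc h p) \<in> borel_measurable borel \<and>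
     (\<forall>d t x v. d \<noteq> Dt \<and> 0 \<le> t \<and> t < Tb \<longrightarrow> sl d h t x v differentiable (at 0))"

fun SS :: "real \<Rightarrow> nat \<Rightarrow> (real \<Rightarrow> real^3 \<Rightarrow> real^3 \<Rightarrow> real) \<Rightarrow> bool" where
  "SS Tb 0 h = good Tb h"
| "SS Tb (Suc n) h = (good Tb h \<and> (\<forall>d. d \<noteq> Dt \<longrightarrow> SS Tb n (pdir d h)))"

lemma pdir_sl: "d \<noteq> Dt \<Longrightarrow> pdir d h t x v = deriv (sl d h t x v) 0"
  by (cases d) (auto simp: sl_def dxs_def dvs_def)

lemma slice_diff_sl: "d \<noteq> Dt \<Longrightarrow> slice_diff d h t x v = (sl d h t x v differentiable (at 0))"
  by (cases d) (auto simp: sl_def)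

lemma sl_0: "d \<noteq> Dt \<Longrightarrow> sl d h t x v 0 = h t x v"
  by (cases d) (auto simp: sl_def)

lemma sl_comp2: "d \<noteq> Dt \<Longrightarrow> sl d (\<lambda>t x v. F (h1 t x v) (h2 t x v)) t x v = (\<lambda>s. F (sl d h1 t x v s) (sl d h2 t x v s))"
  by (cases d) (auto simp: sl_def)

lemma sl_comp1: "d \<noteq> Dt \<Longrightarrow> sl d (\<lambda>t x v. F (h1 t x v)) t x v = (\<lambda>s. F (sl d h1 t x v s))"
  by (cases d) (auto simp: sl_def)

lemma sl_tconst: "d \<noteq> Dt \<Longrightarrow> sl d (\<lambda>t x v. c t) t x v = (\<lambda>s. c t)"
  by (cases d) (auto simp: sl_def)

lemma sl_cong: "d \<noteq> Dt \<Longrightarrow> (\<And>x v. h' t x v = h t x v) \<Longrightarrow> sl d h' t x v = sl d h t x v"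
  by (cases d) (auto simp: sl_def)

lemma RG_borel: "RG Tb \<in> sets borel"
proof -
  have "RG Tb = ({0..} \<times> UNIV) \<inter> ({..<Tb} \<times> UNIV)" by (auto simp: RG_def)
  moreover have "({0::real..} \<times> (UNIV :: ((real^3) \<times> (real^3)) set)) \<in> sets borel"
    by (auto intro!: borel_closed closed_Times)
  moreover have "({..<Tb::real} \<times> (UNIV :: ((real^3) \<times> (real^3)) set)) \<in> sets borel"
    by (auto intro!: borel_open open_Times)
  ultimately show ?thesis by auto
qed

lemma RG_iff: "p \<in> RG Tb \<longleftrightarrow> 0 \<le> fst p \<and> fst p < Tb"
  by (cases p) (auto simp: RG_def)

lemma good_cong:
  assumes "good Tb h" "\<And>t x v. 0 \<le> t \<Longrightarrow> t < Tb \<Longrightarrow> h' t x v = h t x v"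
  shows "good Tb h'"
proof -
  have "(\<lambda>p. indicator (RG Tb) p * unc h' p) = (\<lambda>p. indicator (RG Tb) p * unc h p)"
    using assms(2) by (auto simp: indicator_def RG_iff unc_def)
  moreover have "sl d h' t x v = sl d h t x v" if "d \<noteq> Dt" "0 \<le> t" "t < Tb" for d t x v
    using sl_cong[OF that(1)] assms(2) that by blast
  ultimately show ?thesis using assms(1) unfolding good_def by (metis (no_types, lifting))
qed

lemma pdir_cong:
  assumes "d \<noteq> Dt" "\<And>t x v. 0 \<le> t \<Longrightarrow> t < Tb \<Longrightarrow> h' t x v = h t x v" "0 \<le> t" "t < Tb"
  shows "pdir d h' t x v = pdir d h t x v"
proof -
  have "sl d h' t x v = sl d h t x v" by (rule sl_cong[OF assms(1)]) (simp add: assms)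
  then show ?thesis by (simp only: pdir_sl[OF assms(1)])
qed

lemma SS_cong:
  "SS Tb n h \<Longrightarrow> (\<And>t x v. 0 \<le> t \<Longrightarrow> t < Tb \<Longrightarrow> h' t x v = h t x v) \<Longrightarrow> SS Tb n h'"
proof (induction n arbitrary: h h')
  case 0
  have "good Tb h" using 0(1) by simp
  then have "good Tb h'" by (rule good_cong) (rule 0(2))
  then show ?case by simp
next
  case (Suc n)
  have gh: "good Tb h" using Suc.prems(1) by simp
  have "good Tb h'" using gh by (rule good_cong) (rule Suc.prems(2))
  moreover have "SS Tb n (pdir d h')" if "d \<noteq> Dt" for d
  proof (rule Suc.IH)
    show "SS Tb n (pdir d h)" using Suc.prems(1) that by simp
    show "pdir d h' t x v = pdir d h t x v" if "0 \<le> t" "t < Tb" for t x v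
      by (rule pdir_cong[OF \<open>d \<noteq> Dt\<close> Suc.prems(2) that])
  qed
  ultimately show ?case by simp
qed

lemma SS_good: "SS Tb n h \<Longrightarrow> good Tb h"
  by (cases n) auto

lemma SS_mono: "SS Tb (Suc n) h \<Longrightarrow> SS Tb n h"
proof (induction n arbitrary: h)
  case 0 then show ?case by simp
next
  case (Suc n) then show ?case by auto
qed

lemma good_diff: "good Tb h \<Longrightarrow> d \<noteq> Dt \<Longrightarrow> 0 \<le> t \<Longrightarrow> t < Tb \<Longrightarrow> sl d h t x v differentiable (at 0)"
  unfolding good_def by blast

lemma good_meas: "good Tb h \<Longrightarrow> (\<lambda>p. indicator (RG Tb) p * unc h p) \<in> borel_measurable borel"
  unfolding good_def by blast

lemma diff_deriv: "f differentiable (at (0::real)) \<Longrightarrow> (f has_real_derivative deriv f 0) (at 0)"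
  using DERIV_deriv_iff_real_differentiable by blast

lemma good_add: "good Tb h1 \<Longrightarrow> good Tb h2 \<Longrightarrow> good Tb (\<lambda>t x v. h1 t x v + h2 t x v)"
proof -
  assume g1: "good Tb h1" and g2: "good Tb h2"
  have "(\<lambda>p. indicator (RG Tb) p * unc (\<lambda>t x v. h1 t x v + h2 t x v) p) =
        (\<lambda>p. indicator (RG Tb) p * unc h1 p + indicator (RG Tb) p * unc h2 p)"
    by (auto simp: unc_def algebra_simps)
  then have m: "(\<lambda>p. indicator (RG Tb) p * unc (\<lambda>t x v. h1 t x v + h2 t x v) p) \<in> borel_measurable borel"
    using good_meas[OF g1] good_meas[OF g2] by simp
  have "sl d (\<lambda>t x v. h1 t x v + h2 t x v) t x v differentiable (at 0)"
    if "d \<noteq> Dt" "0 \<le> t" "t < Tb" for d t x v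
    using good_diff[OF g1 that] good_diff[OF g2 that] sl_comp2[OF that(1), of "(+)" h1 h2]
    by (simp add: differentiable_add)
  then show ?thesis using m unfolding good_def by blast
qed

lemma pdir_add:
  assumes "good Tb h1" "good Tb h2" "d \<noteq> Dt" "0 \<le> t" "t < Tb"
  shows "pdir d (\<lambda>t x v. h1 t x v + h2 t x v) t x v = pdir d h1 t x v + pdir d h2 t x v"
proof -
  note a = diff_deriv[OF good_diff[OF assms(1) assms(3-5)]] diff_deriv[OF good_diff[OF assms(2) assms(3-5)]]
  show ?thesis
    using DERIV_imp_deriv[OF DERIV_add[OF a]] assms(3) sl_comp2[OF assms(3), of "(+)" h1 h2]
    by (simp add: pdir_sl)
qed

lemma SS_add: "SS Tb n h1 \<Longrightarrow> SS Tb n h2 \<Longrightarrow> SS Tb n (\<lambda>t x v. h1 t x v + h2 t x v)"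
proof (induction n arbitrary: h1 h2)
  case 0 then show ?case by (simp add: good_add)
next
  case (Suc n)
  have g: "good Tb h1" "good Tb h2" using Suc.prems by auto
  have "SS Tb n (pdir d (\<lambda>t x v. h1 t x v + h2 t x v))" if "d \<noteq> Dt" for d
  proof (rule SS_cong)
    show "SS Tb n (\<lambda>t x v. pdir d h1 t x v + pdir d h2 t x v)"
      using Suc.IH Suc.prems that by auto
    show "pdir d (\<lambda>t x v. h1 t x v + h2 t x v) t x v = pdir d h1 t x v + pdir d h2 t x v"
      if "0 \<le> t" "t < Tb" for t x v
      using pdir_add[OF g \<open>d \<noteq> Dt\<close> that] .
  qed
  then show ?case using g good_add by simp
qed

lemma good_mul: "good Tb h1 \<Longrightarrow> good Tb h2 \<Longrightarrow> good Tb (\<lambda>t x v. h1 t x v * h2 t x v)"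
proof -
  assume g1: "good Tb h1" and g2: "good Tb h2"
  have "(\<lambda>p. indicator (RG Tb) p * unc (\<lambda>t x v. h1 t x v * h2 t x v) p) =
        (\<lambda>p. (indicator (RG Tb) p * unc h1 p) * (indicator (RG Tb) p * unc h2 p))"
    by (auto simp: unc_def indicator_def)
  then have m: "(\<lambda>p. indicator (RG Tb) p * unc (\<lambda>t x v. h1 t x v * h2 t x v) p) \<in> borel_measurable borel"
    using good_meas[OF g1] good_meas[OF g2] by simp
  have "sl d (\<lambda>t x v. h1 t x v * h2 t x v) t x v differentiable (at 0)"
    if "d \<noteq> Dt" "0 \<le> t" "t < Tb" for d t x v
    using good_diff[OF g1 that] good_diff[OF g2 that] sl_comp2[OF that(1), of "(*)" h1 h2]
    by (simp add: differentiable_mult)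
  then show ?thesis using m unfolding good_def by blast
qed

lemma pdir_mul:
  assumes "good Tb h1" "good Tb h2" "d \<noteq> Dt" "0 \<le> t" "t < Tb"
  shows "pdir d (\<lambda>t x v. h1 t x v * h2 t x v) t x v = pdir d h1 t x v * h2 t x v + h1 t x v * pdir d h2 t x v"
proof -
  note a = diff_deriv[OF good_diff[OF assms(1) assms(3-5)]] diff_deriv[OF good_diff[OF assms(2) assms(3-5)]]
  show ?thesis
    using DERIV_imp_deriv[OF DERIV_mult[OF a]] assms(3) sl_comp2[OF assms(3), of "(*)" h1 h2]
    by (simp add: pdir_sl sl_0)
qed

lemma SS_mul: "SS Tb n h1 \<Longrightarrow> SS Tb n h2 \<Longrightarrow> SS Tb n (\<lambda>t x v. h1 t x v * h2 t x v)"
proof (induction n arbitrary: h1 h2)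
  case 0 then show ?case by (simp add: good_mul)
next
  case (Suc n)
  have g: "good Tb h1" "good Tb h2" using Suc.prems by auto
  have m: "SS Tb n h1" "SS Tb n h2" using Suc.prems SS_mono by blast+
  have "SS Tb n (pdir d (\<lambda>t x v. h1 t x v * h2 t x v))" if "d \<noteq> Dt" for d
  proof (rule SS_cong)
    show "SS Tb n (\<lambda>t x v. pdir d h1 t x v * h2 t x v + h1 t x v * pdir d h2 t x v)"
      using Suc.IH Suc.prems that m SS_add by auto
    show "pdir d (\<lambda>t x v. h1 t x v * h2 t x v) t x v = pdir d h1 t x v * h2 t x v + h1 t x v * pdir d h2 t x v"
      if "0 \<le> t" "t < Tb" for t x v
      using pdir_mul[OF g \<open>d \<noteq> Dt\<close> that] .
  qed
  then show ?case using g good_mul by simp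
qed


lemma meas_fst_comp: "c \<in> borel_measurable (borel::real measure) \<Longrightarrow>
   (\<lambda>p::real \<times> (real^3) \<times> (real^3). c (fst p)) \<in> borel_measurable borel"
  by (rule measurable_compose[of fst _ borel], intro borel_measurable_continuous_onI continuous_intros)

lemma good_tconst: "c \<in> borel_measurable borel \<Longrightarrow> good Tb (\<lambda>t x v. c t)"
proof -
  assume c: "c \<in> borel_measurable borel"
  have "(\<lambda>p. indicator (RG Tb) p * unc (\<lambda>t x v. c t) p) = (\<lambda>p. indicator (RG Tb) p * c (fst p))"
    by (simp add: unc_def)
  moreover have "(\<lambda>p. indicator (RG Tb) p * c (fst p)) \<in> borel_measurable borel"
    by (intro borel_measurable_times borel_measurable_indicator RG_borel meas_fst_comp c)
  moreover have "sl d (\<lambda>t x v. c t) t x v differentiable (at 0)" if "d \<noteq> Dt" for d t x v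
    using sl_tconst[OF that] by simp
  ultimately show ?thesis unfolding good_def by simp
qed

lemma pdir_tconst: "d \<noteq> Dt \<Longrightarrow> pdir d (\<lambda>t x v. c t) = (\<lambda>t x v. 0)"
  by (intro ext) (simp add: pdir_sl sl_tconst)

lemma SS_tconst: "c \<in> borel_measurable borel \<Longrightarrow> SS Tb n (\<lambda>t x v. c t)"
proof (induction n arbitrary: c)
  case 0 then show ?case by (simp add: good_tconst)
next
  case (Suc n)
  have "SS Tb n (\<lambda>t x v. (\<lambda>t. 0::real) t)" by (rule Suc.IH) simp
  then show ?case using Suc.prems good_tconst pdir_tconst by simp
qed

lemma SS_vcomp: "SS Tb n (\<lambda>t x v. v $ i)"
proof -
  have g: "good Tb (\<lambda>t x v. v $ i)"
  proof -
    have "(\<lambda>p. indicator (RG Tb) p * unc (\<lambda>t x v. v $ i) p) \<in> borel_measurable borel"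
      unfolding unc_def
      by (intro borel_measurable_times borel_measurable_indicator RG_borel
          borel_measurable_continuous_onI continuous_intros)
    moreover have "sl d (\<lambda>t x v. v $ i) t x v differentiable (at 0)" if "d \<noteq> Dt" for d t x v
    proof (cases d)
      case (Dx l) then show ?thesis by (simp add: sl_def)
    next
      case (Dv l)
      have "(\<lambda>s. (v + s *\<^sub>R axis l 1) $ i) = (\<lambda>s. v $ i + s * (axis l 1 :: real^3) $ i)" by auto
      moreover have "(\<lambda>s. v $ i + s * (axis l 1 :: real^3) $ i) differentiable (at 0)"
        by (intro derivative_intros)
      ultimately show ?thesis using Dv by (simp add: sl_def)
    qed (use that in auto)
    ultimately show ?thesis unfolding good_def by blast
  qed
  have pd: "\<exists>k. pdir d (\<lambda>t x v. v $ i) = (\<lambda>t x v. (\<lambda>t. k) t)" if "d \<noteq> Dt" for d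
  proof (cases d)
    case (Dx l) then show ?thesis
      by (intro exI[of _ 0]) (auto simp: dxs_def DERIV_imp_deriv[OF DERIV_const] intro!: ext)
  next
    case (Dv l)
    have "deriv (\<lambda>s. (v + s *\<^sub>R axis l 1) $ i) 0 = (axis l 1 :: real^3) $ i" for v :: "real^3"
    proof -
      have "(\<lambda>s. (v + s *\<^sub>R axis l 1) $ i) = (\<lambda>s. v $ i + s * (axis l 1 :: real^3) $ i)" by auto
      moreover have "((\<lambda>s. v $ i + s * (axis l 1 :: real^3) $ i) has_real_derivative (axis l 1 :: real^3) $ i) (at 0)"
        by (auto intro!: derivative_eq_intros)
      ultimately show ?thesis by (simp add: DERIV_imp_deriv)
    qed
    then show ?thesis using Dv
      by (intro exI[of _ "(axis l 1 :: real^3) $ i"]) (auto simp: dvs_def intro!: ext)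
  qed (use that in auto)
  show ?thesis
  proof (cases n)
    case 0 then show ?thesis using g by simp
  next
    case (Suc m)
    have "SS Tb m (pdir d (\<lambda>t x v. v $ i))" if "d \<noteq> Dt" for d
      using pd[OF that] SS_tconst[of "\<lambda>t. _" Tb m] by auto
    then show ?thesis using g Suc by simp
  qed
qed

lemma good_exp: "good Tb u \<Longrightarrow> good Tb (\<lambda>t x v. exp (u t x v))"
proof -
  assume g: "good Tb u"
  have "(\<lambda>p. indicator (RG Tb) p * unc (\<lambda>t x v. exp (u t x v)) p) =
        (\<lambda>p. indicator (RG Tb) p * exp (indicator (RG Tb) p * unc u p))"
    by (auto simp: unc_def indicator_def)
  moreover have "(\<lambda>p. indicator (RG Tb) p * exp (indicator (RG Tb) p * unc u p)) \<in> borel_measurable borel"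
    by (intro borel_measurable_times borel_measurable_indicator RG_borel
        measurable_compose[OF good_meas[OF g] borel_measurable_exp])
  moreover have "sl d (\<lambda>t x v. exp (u t x v)) t x v differentiable (at 0)"
    if "d \<noteq> Dt" "0 \<le> t" "t < Tb" for d t x v
    using DERIV_fun_exp[OF diff_deriv[OF good_diff[OF g that]]] sl_comp1[OF that(1), of exp u]
    by (auto simp: real_differentiable_def)
  ultimately show ?thesis unfolding good_def by simp
qed

lemma pdir_exp:
  assumes "good Tb u" "d \<noteq> Dt" "0 \<le> t" "t < Tb"
  shows "pdir d (\<lambda>t x v. exp (u t x v)) t x v = exp (u t x v) * pdir d u t x v"
  using DERIV_imp_deriv[OF DERIV_fun_exp[OF diff_deriv[OF good_diff[OF assms]]]]
    sl_comp1[OF assms(2), of exp u]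
  by (simp add: pdir_sl[OF assms(2)] sl_0[OF assms(2)])

lemma SS_exp: "SS Tb n u \<Longrightarrow> SS Tb n (\<lambda>t x v. exp (u t x v))"
proof (induction n arbitrary: u)
  case 0 then show ?case by (simp add: good_exp)
next
  case (Suc n)
  have g: "good Tb u" using Suc.prems by simp
  have m: "SS Tb n u" using Suc.prems SS_mono by blast
  have "SS Tb n (pdir d (\<lambda>t x v. exp (u t x v)))" if "d \<noteq> Dt" for d
  proof (rule SS_cong)
    show "SS Tb n (\<lambda>t x v. exp (u t x v) * pdir d u t x v)"
      using Suc.IH[OF m] Suc.prems that SS_mul by auto
    show "pdir d (\<lambda>t x v. exp (u t x v)) t x v = exp (u t x v) * pdir d u t x v"
      if "0 \<le> t" "t < Tb" for t x v
      using pdir_exp[OF g \<open>d \<noteq> Dt\<close> that] .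
  qed
  then show ?case using g good_exp by simp
qed

lemma good_pow:
  assumes g: "good Tb u" and pos: "\<And>t x v. 0 \<le> t \<Longrightarrow> t < Tb \<Longrightarrow> u t x v > 0"
  shows "good Tb (\<lambda>t x v. u t x v powr p)"
proof -
  have "(\<lambda>q. indicator (RG Tb) q * unc (\<lambda>t x v. u t x v powr p) q) =
        (\<lambda>q. indicator (RG Tb) q * (indicator (RG Tb) q * unc u q) powr p)"
    by (auto simp: unc_def indicator_def)
  moreover have "(\<lambda>q. indicator (RG Tb) q * (indicator (RG Tb) q * unc u q) powr p) \<in> borel_measurable borel"
    by (intro borel_measurable_times borel_measurable_indicator RG_borel
        powr_real_measurable good_meas[OF g] borel_measurable_const)
  moreover have "sl d (\<lambda>t x v. u t x v powr p) t x v differentiable (at 0)"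
    if "d \<noteq> Dt" "0 \<le> t" "t < Tb" for d t x v
    using DERIV_fun_powr[OF diff_deriv[OF good_diff[OF g that, of x v]], of p] pos[OF that(2,3), of x v]
      sl_comp1[OF that(1), of "\<lambda>y. y powr p" u] sl_0[OF that(1), of u]
    by (auto simp: real_differentiable_def)
  ultimately show ?thesis unfolding good_def by simp
qed

lemma pdir_pow:
  assumes "good Tb u" "d \<noteq> Dt" "0 \<le> t" "t < Tb" "u t x v > 0"
  shows "pdir d (\<lambda>t x v. u t x v powr p) t x v = p * (u t x v powr (p - 1) * pdir d u t x v)"
  using DERIV_imp_deriv[OF DERIV_fun_powr[OF diff_deriv[OF good_diff[OF assms(1-4), of x v]], of p]]
    sl_comp1[OF assms(2), of "\<lambda>y. y powr p" u] assms(5)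
  by (simp add: pdir_sl[OF assms(2)] sl_0[OF assms(2)])

lemma SS_pow:
  "SS Tb n u \<Longrightarrow> (\<And>t x v. 0 \<le> t \<Longrightarrow> t < Tb \<Longrightarrow> u t x v > 0) \<Longrightarrow> SS Tb n (\<lambda>t x v. u t x v powr p)"
proof (induction n arbitrary: u p)
  case 0 then show ?case using good_pow by simp
next
  case (Suc n)
  have g: "good Tb u" using Suc.prems by simp
  have m: "SS Tb n u" using Suc.prems SS_mono by blast
  have "SS Tb n (pdir d (\<lambda>t x v. u t x v powr p))" if "d \<noteq> Dt" for d
  proof (rule SS_cong)
    have "SS Tb n (\<lambda>t x v. u t x v powr (p - 1))" using Suc.IH[OF m] Suc.prems(2) by blast
    moreover have "SS Tb n (pdir d u)" using Suc.prems that by auto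
    ultimately have "SS Tb n (\<lambda>t x v. u t x v powr (p - 1) * pdir d u t x v)" by (rule SS_mul)
    then show "SS Tb n (\<lambda>t x v. (\<lambda>t. p) t * (u t x v powr (p - 1) * pdir d u t x v))"
      using SS_mul[OF SS_tconst[of "\<lambda>t. p"]] by simp
    show "pdir d (\<lambda>t x v. u t x v powr p) t x v = (\<lambda>t. p) t * (u t x v powr (p - 1) * pdir d u t x v)"
      if "0 \<le> t" "t < Tb" for t x v
      using pdir_pow[OF g \<open>d \<noteq> Dt\<close> that Suc.prems(2)[OF that]] by simp
  qed
  then show ?case using g good_pow Suc.prems(2) by simp
qed


lemma applyD_Cons: "applyD (d # ds) h = pdir d (applyD ds h)"
  by (simp add: applyD_def)

lemma good_applyD:
  assumes r: "regular Tb f" and ds: "Dt \<notin> set ds"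
  shows "good Tb (applyD ds f)"
proof -
  have c: "continuous_on ({0..<Tb} \<times> (UNIV :: ((real^3) \<times> (real^3)) set))
              (\<lambda>p. applyD ds f (fst p) (fst (snd p)) (snd (snd p)))"
    using r ds unfolding regular_def by blast
  have sd: "slice_diff d (applyD ds f) t x v" if "d \<noteq> Dt" "0 \<le> t" "t < Tb" for d t x v
    using r ds that unfolding regular_def by blast
  have "(\<lambda>p. indicator (RG Tb) p *\<^sub>R unc (applyD ds f) p) \<in> borel_measurable borel"
    by (rule borel_measurable_continuous_on_indicator)
       (use c RG_borel in \<open>simp_all add: RG_def unc_def\<close>)
  then have "(\<lambda>p. indicator (RG Tb) p * unc (applyD ds f) p) \<in> borel_measurable borel" by simp
  moreover have "sl d (applyD ds f) t x v differentiable (at 0)" if "d \<noteq> Dt" "0 \<le> t" "t < Tb" for d t x v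
    using sd[OF that] slice_diff_sl[OF that(1)] by simp
  ultimately show ?thesis unfolding good_def by blast
qed

lemma SS_applyD: "regular Tb f \<Longrightarrow> Dt \<notin> set ds \<Longrightarrow> SS Tb n (applyD ds f)"
proof (induction n arbitrary: ds)
  case 0 then show ?case by (simp add: good_applyD)
next
  case (Suc n)
  have "SS Tb n (pdir d (applyD ds f))" if "d \<noteq> Dt" for d
    using Suc.IH[of "d # ds"] Suc.prems that by (simp add: applyD_Cons)
  then show ?case using good_applyD[OF Suc.prems] by simp
qed

lemma SS_f: "regular Tb f \<Longrightarrow> SS Tb n f"
  using SS_applyD[of Tb f "[]" n] by (simp add: applyD_def)

definition SSi :: "real \<Rightarrow> (real \<Rightarrow> real^3 \<Rightarrow> real^3 \<Rightarrow> real) \<Rightarrow> bool" where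
  "SSi Tb h \<longleftrightarrow> (\<forall>n. SS Tb n h)"

lemma SSi_pdir: "SSi Tb h \<Longrightarrow> d \<noteq> Dt \<Longrightarrow> SSi Tb (pdir d h)"
  unfolding SSi_def by (metis SS.simps(2))

lemma SSi_Yop: "SSi Tb h \<Longrightarrow> SSi Tb (Yop l h)"
proof -
  assume h: "SSi Tb h"
  have "SS Tb n (\<lambda>t x v. (\<lambda>t. t + 1) t * pdir (Dx l) h t x v + pdir (Dv l) h t x v)" for n
    using SSi_pdir[OF h, of "Dx l"] SSi_pdir[OF h, of "Dv l"] unfolding SSi_def
    by (intro SS_add SS_mul SS_tconst) (auto intro: borel_measurable_continuous_onI continuous_intros)
  then show ?thesis unfolding SSi_def Yop_def by simp
qed

lemma SSi_funpow: "(\<And>h. SSi Tb h \<Longrightarrow> SSi Tb (Q h)) \<Longrightarrow> SSi Tb h \<Longrightarrow> SSi Tb ((Q ^^ k) h)"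
  by (induction k) auto

lemma SSi_mop: "(\<And>l h. SSi Tb h \<Longrightarrow> SSi Tb (P l h)) \<Longrightarrow> SSi Tb h \<Longrightarrow> SSi Tb (mop P a h)"
  unfolding mop_def by (intro SSi_funpow) auto

lemma SSi_Dop: "SSi Tb h \<Longrightarrow> SSi Tb (Dop a b s h)"
  unfolding Dop_def
  by (intro SSi_mop SSi_pdir SSi_Yop) auto

lemma jb_eq: "jb v = (1 + (v $ 1 * v $ 1 + v $ 2 * v $ 2 + v $ 3 * v $ 3)) powr (1/2)"
proof -
  have "(norm v)\<^sup>2 = v $ 1 * v $ 1 + v $ 2 * v $ 2 + v $ 3 * v $ 3"
    by (simp add: power2_norm_eq_inner inner_vec_def sum_3)
  moreover have "0 \<le> 1 + (norm v)\<^sup>2" by simp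
  ultimately show ?thesis unfolding jb_def by (simp add: powr_half_sqrt)
qed

lemma SS_jb: "SS Tb n (\<lambda>t x v. jb v)"
proof -
  have m1: "(\<lambda>t::real. 1::real) \<in> borel_measurable borel" by simp
  have "SS Tb n (\<lambda>t x v. ((\<lambda>t. 1) t + (v $ 1 * v $ 1 + v $ 2 * v $ 2 + v $ 3 * v $ 3)) powr (1/2))"
    by (intro SS_pow SS_add SS_mul SS_vcomp SS_tconst m1)
       (simp add: add_pos_nonneg)
  then show ?thesis by (simp add: jb_eq)
qed

lemma SSi_gfun: "regular Tb f \<Longrightarrow> SSi Tb (gfun d0 \<delta> f)"
proof -
  assume r: "regular Tb f"
  have md: "dfun d0 \<delta> \<in> borel_measurable borel"
    unfolding dfun_def by measurable
  have "SS Tb n (\<lambda>t x v. exp (dfun d0 \<delta> t * jb v) * f t x v)" for n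
    by (intro SS_mul SS_exp SS_tconst SS_jb SS_f r md)
  then show ?thesis unfolding SSi_def gfun_def by simp
qed



lemma jb_ge1: "1 \<le> jb z"
  unfolding jb_def by simp

lemma W_le:
  assumes "mlen a' \<le> mlen a + 1" "mlen b' + 1 \<le> mlen b"
  shows "W a b s t x v \<le> jb v * W a' b' s t x v"
proof -
  have ra: "real (mlen a') \<le> real (mlen a) + 1" "real (mlen b') + 1 \<le> real (mlen b)"
    using assms by linarith+
  have n: "nu a b s \<le> 1 + nu a' b' s" using ra unfolding nu_def by (simp only: distrib_left)
  have o: "om a b s \<le> om a' b' s" using ra unfolding om_def by (simp only: distrib_left)
  have j1: "1 \<le> jb v" "1 \<le> jb (x - (t + 1) *\<^sub>R v)" by (rule jb_ge1)+
  have "jb v powr nu a b s \<le> jb v powr (1 + nu a' b' s)" by (rule powr_mono[OF n j1(1)])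
  also have "\<dots> = jb v * jb v powr nu a' b' s" using j1 by (simp add: powr_add)
  finally have 1: "jb v powr nu a b s \<le> jb v * jb v powr nu a' b' s" .
  have 2: "jb (x - (t + 1) *\<^sub>R v) powr om a b s \<le> jb (x - (t + 1) *\<^sub>R v) powr om a' b' s"
    by (rule powr_mono[OF o j1(2)])
  have "W a b s t x v \<le> (jb v * jb v powr nu a' b' s) * jb (x - (t + 1) *\<^sub>R v) powr om a' b' s"
    unfolding W_def using j1 by (intro mult_mono[OF 1 2]) auto
  then show ?thesis unfolding W_def by (simp add: mult.assoc)
qed

lemma young: "0 < e \<Longrightarrow> u * w * q \<le> e * u\<^sup>2 + q\<^sup>2 / (4 * e) * w\<^sup>2" for u w q e :: real
proof -
  assume e: "0 < e"
  have "0 \<le> (2 * e * u - q * w)\<^sup>2 / (4 * e)" using e by simp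
  also have "(2 * e * u - q * w)\<^sup>2 / (4 * e) = e * u\<^sup>2 + q\<^sup>2 / (4 * e) * w\<^sup>2 - u * w * q"
    using e by (simp add: field_simps power2_eq_square)
  finally show ?thesis by simp
qed

definition phi :: "real \<Rightarrow> nat^3 \<Rightarrow> nat^3 \<Rightarrow> nat^3 \<Rightarrow> (real \<Rightarrow> real^3 \<Rightarrow> real^3 \<Rightarrow> real) \<Rightarrow> real \<Rightarrow> real^3 \<Rightarrow> real^3 \<Rightarrow> real" where
  "phi \<delta> a b s g t x v = (1 + t) powr (- (1 + \<delta>) / 2) * jb v powr (1/2) * W a b s t x v * Dop a b s g t x v"

lemma pointwise:
  assumes "mlen a' \<le> mlen a + 1" "mlen b' + 1 \<le> mlen b" "0 < e" "0 \<le> t" "t \<le> T" "0 < \<delta>"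
  shows "(W a b s t x v)\<^sup>2 * \<bar>Dop a b s g t x v\<bar> * \<bar>Dop a' b' s g t x v\<bar>
     \<le> e * (phi \<delta> a b s g t x v)\<^sup>2 + (1 / (4 * e)) * ((1 + T) powr (2 * (1 + \<delta>))) * (phi \<delta> a' b' s g t x v)\<^sup>2"
proof -
  define A where "A = (1 + t) powr (- (1 + \<delta>) / 2)"
  define r where "r = jb v powr (1/2)"
  define Pt where "Pt = (1 + t) powr (1 + \<delta>)"
  define W1 where "W1 = W a b s t x v"
  define W2 where "W2 = W a' b' s t x v"
  define D1 where "D1 = \<bar>Dop a b s g t x v\<bar>"
  define D2 where "D2 = \<bar>Dop a' b' s g t x v\<bar>"
  have t1: "0 < 1 + t" using assms by simp
  have AAP: "A * A * Pt = 1" unfolding A_def Pt_def using t1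
    by (simp add: powr_add[symmetric])
  have rr: "r * r = jb v" unfolding r_def using jb_ge1[of v]
    by (simp add: powr_add[symmetric])
  have W1p: "0 \<le> W1" "0 \<le> W2" unfolding W1_def W2_def W_def by simp_all
  have D: "0 \<le> D1" "0 \<le> D2" unfolding D1_def D2_def by simp_all
  have Wl: "W1 \<le> jb v * W2" unfolding W1_def W2_def by (rule W_le[OF assms(1,2)])
  have "W1\<^sup>2 * D1 * D2 = W1 * D1 * (W1 * D2)" by (simp add: power2_eq_square)
  also have "\<dots> \<le> W1 * D1 * (jb v * W2 * D2)"
    using Wl W1p D by (intro mult_left_mono mult_right_mono) simp_all
  also have "\<dots> = (A * r * W1 * D1) * (A * r * W2 * D2) * Pt"
  proof -
    have "W1 * D1 * (jb v * W2 * D2) = (A * A * Pt) * (r * r) * (W1 * D1 * W2 * D2)"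
      unfolding AAP rr by (simp add: algebra_simps)
    also have "\<dots> = (A * r * W1 * D1) * (A * r * W2 * D2) * Pt" by (simp add: algebra_simps)
    finally show ?thesis .
  qed
  also have "\<dots> \<le> e * (A * r * W1 * D1)\<^sup>2 + Pt\<^sup>2 / (4 * e) * (A * r * W2 * D2)\<^sup>2"
    by (rule young[OF assms(3)])
  also have "\<dots> \<le> e * (A * r * W1 * D1)\<^sup>2 + (1 + T) powr (2 * (1 + \<delta>)) / (4 * e) * (A * r * W2 * D2)\<^sup>2"
  proof -
    have "Pt\<^sup>2 = (1 + t) powr (2 * (1 + \<delta>))" unfolding Pt_def using t1
      by (simp add: power2_eq_square powr_add[symmetric])
    also have "\<dots> \<le> (1 + T) powr (2 * (1 + \<delta>))"
      using assms t1 by (intro powr_mono2) auto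
    finally have "Pt\<^sup>2 \<le> (1 + T) powr (2 * (1 + \<delta>))" .
    then show ?thesis using assms(3)
      by (intro add_left_mono mult_right_mono divide_right_mono) auto
  qed
  also have "\<dots> = e * (phi \<delta> a b s g t x v)\<^sup>2 + (1 / (4 * e)) * ((1 + T) powr (2 * (1 + \<delta>))) * (phi \<delta> a' b' s g t x v)\<^sup>2"
    unfolding phi_def A_def r_def W1_def W2_def D1_def D2_def
    by (simp add: power2_eq_square abs_mult_self_eq)
  finally show ?thesis unfolding W1_def D1_def D2_def .
qed


lemma jb_meas[measurable]: "jb \<in> borel_measurable borel"
  unfolding jb_def by (intro borel_measurable_continuous_onI continuous_intros)

lemma meas_phi:
  assumes g: "good Tb (Dop a b s g)" and T: "T < Tb"
  shows "(\<lambda>p. ennreal (indicator {0..T} (fst p) * (phi \<delta> a b s g (fst p) (fst (snd p)) (snd (snd p)))\<^sup>2))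
           \<in> borel_measurable borel"
proof -
  define wt where "wt p = (1 + fst p) powr (- (1 + \<delta>) / 2) * jb (snd (snd p)) powr (1/2)
       * W a b s (fst p) (fst (snd p)) (snd (snd p))" for p :: "real \<times> (real^3) \<times> (real^3)"
  have nz: "1 + (norm z)\<^sup>2 \<noteq> 0" for z :: "real^3"
    by (smt (verit) zero_le_power2)
  have c: "(\<lambda>p::real \<times> (real^3) \<times> (real^3). jb (snd (snd p)) powr (1/2) * (jb (snd (snd p)) powr nu a b s
      * jb (fst (snd p) - (fst p + 1) *\<^sub>R snd (snd p)) powr om a b s)) \<in> borel_measurable borel"
    using nz by (intro borel_measurable_continuous_onI) (auto intro!: continuous_intros simp: jb_def)
  have p: "(\<lambda>p::real \<times> (real^3) \<times> (real^3). (1 + fst p) powr (- (1 + \<delta>) / 2)) \<in> borel_measurable borel"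
    by (intro powr_real_measurable borel_measurable_const borel_measurable_continuous_onI continuous_intros)
  have "wt = (\<lambda>p. (1 + fst p) powr (- (1 + \<delta>) / 2) * (jb (snd (snd p)) powr (1/2) * (jb (snd (snd p)) powr nu a b s
      * jb (fst (snd p) - (fst p + 1) *\<^sub>R snd (snd p)) powr om a b s)))"
    unfolding wt_def W_def by (simp add: mult.assoc)
  then have mw: "wt \<in> borel_measurable borel"
    using borel_measurable_times[OF p c] by simp
  have mi: "(\<lambda>p::real \<times> (real^3) \<times> (real^3). indicator {0..T} (fst p) :: real) \<in> borel_measurable borel"
    by (rule meas_fst_comp) (rule borel_measurable_indicator, simp)
  have eq: "(\<lambda>p. ennreal (indicator {0..T} (fst p) * (phi \<delta> a b s g (fst p) (fst (snd p)) (snd (snd p)))\<^sup>2))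
     = (\<lambda>p. ennreal (indicator {0..T} (fst p) * (wt p * (indicator (RG Tb) p * unc (Dop a b s g) p))\<^sup>2))"
    using T by (auto simp: indicator_def RG_iff phi_def wt_def unc_def intro!: ext)
  show ?thesis unfolding eq
    by (intro measurable_compose[OF _ measurable_ennreal] borel_measurable_times mi
        borel_measurable_power mw good_meas[OF g])
qed


lemma sq_txv_eq:
  "sq_txv {0..T} h = (\<integral>\<^sup>+t. \<integral>\<^sup>+x. \<integral>\<^sup>+v. ennreal (indicator {0..T} t * (h t x v)\<^sup>2) \<partial>lborel \<partial>lborel \<partial>lborel)"
  unfolding sq_txv_def sq_xv_def
  by (intro nn_integral_cong) (auto simp: indicator_def)

lemma core:
  assumes g1: "good Tb (Dop a b s g)" and g2: "good Tb (Dop a' b' s g)"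
    and ab: "mlen a' \<le> mlen a + 1" "mlen b' + 1 \<le> mlen b"
    and e: "0 < e" and T: "0 \<le> T" "T < Tb" and dl: "0 < \<delta>"
  shows "L1_txv {0..T} (\<lambda>t x v. (W a b s t x v)\<^sup>2 * \<bar>Dop a b s g t x v\<bar> * \<bar>Dop a' b' s g t x v\<bar>)
     \<le> ennreal e * sq_txv {0..T} (phi \<delta> a b s g)
       + ennreal (1 / (4 * e)) * ennreal ((1 + T) powr (2 * (1 + \<delta>))) * sq_txv {0..T} (phi \<delta> a' b' s g)"
proof -
  define P where "P = (1 + T) powr (2 * (1 + \<delta>))"
  define c where "c = 1 / (4 * e)"
  define F1 where "F1 t x v = ennreal (indicator {0..T} t * (phi \<delta> a b s g t x v)\<^sup>2)" for t x v
  define F2 where "F2 t x v = ennreal (indicator {0..T} t * (phi \<delta> a' b' s g t x v)\<^sup>2)" for t x v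
  have m1: "(\<lambda>p. F1 (fst p) (fst (snd p)) (snd (snd p))) \<in> borel_measurable borel"
    unfolding F1_def using meas_phi[OF g1 T(2)] .
  have m2: "(\<lambda>p. F2 (fst p) (fst (snd p)) (snd (snd p))) \<in> borel_measurable borel"
    unfolding F2_def using meas_phi[OF g2 T(2)] .
  have c0: "0 \<le> c" "0 \<le> P" using e by (simp_all add: c_def P_def)
  have pt: "ennreal \<bar>(W a b s t x v)\<^sup>2 * \<bar>Dop a b s g t x v\<bar> * \<bar>Dop a' b' s g t x v\<bar>\<bar>
      \<le> ennreal e * F1 t x v + ennreal (c * P) * F2 t x v" if "0 \<le> t" "t \<le> T" for t x v
  proof -
    have "\<bar>(W a b s t x v)\<^sup>2 * \<bar>Dop a b s g t x v\<bar> * \<bar>Dop a' b' s g t x v\<bar>\<bar>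
        \<le> e * (phi \<delta> a b s g t x v)\<^sup>2 + (c * P) * (phi \<delta> a' b' s g t x v)\<^sup>2"
      using pointwise[OF ab e that dl, where x=x and v=v and g=g and s=s] unfolding c_def P_def by (simp add: abs_mult)
    then have "ennreal \<bar>(W a b s t x v)\<^sup>2 * \<bar>Dop a b s g t x v\<bar> * \<bar>Dop a' b' s g t x v\<bar>\<bar>
        \<le> ennreal (e * (phi \<delta> a b s g t x v)\<^sup>2 + (c * P) * (phi \<delta> a' b' s g t x v)\<^sup>2)"
      by (rule ennreal_leI)
    also have "\<dots> = ennreal e * F1 t x v + ennreal (c * P) * F2 t x v"
      unfolding F1_def F2_def using that e c0
      by (simp add: ennreal_plus ennreal_mult indicator_def)
    finally show ?thesis .
  qed
  have "L1_txv {0..T} (\<lambda>t x v. (W a b s t x v)\<^sup>2 * \<bar>Dop a b s g t x v\<bar> * \<bar>Dop a' b' s g t x v\<bar>)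
      \<le> (\<integral>\<^sup>+t. \<integral>\<^sup>+x. \<integral>\<^sup>+v. ennreal e * F1 t x v + ennreal (c * P) * F2 t x v \<partial>lborel \<partial>lborel \<partial>lborel)"
    unfolding L1_txv_def
  proof (rule nn_integral_mono)
    fix t :: real
    show "indicator {0..T} t * (\<integral>\<^sup>+x. \<integral>\<^sup>+v. ennreal \<bar>(W a b s t x v)\<^sup>2 * \<bar>Dop a b s g t x v\<bar> * \<bar>Dop a' b' s g t x v\<bar>\<bar> \<partial>lborel \<partial>lborel)
      \<le> (\<integral>\<^sup>+x. \<integral>\<^sup>+v. ennreal e * F1 t x v + ennreal (c * P) * F2 t x v \<partial>lborel \<partial>lborel)"
    proof (cases "t \<in> {0..T}")
      case True
      then have "(\<integral>\<^sup>+x. \<integral>\<^sup>+v. ennreal \<bar>(W a b s t x v)\<^sup>2 * \<bar>Dop a b s g t x v\<bar> * \<bar>Dop a' b' s g t x v\<bar>\<bar> \<partial>lborel \<partial>lborel)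
         \<le> (\<integral>\<^sup>+x. \<integral>\<^sup>+v. ennreal e * F1 t x v + ennreal (c * P) * F2 t x v \<partial>lborel \<partial>lborel)"
        using pt by (intro nn_integral_mono) auto
      then show ?thesis using True by simp
    next
      case False then show ?thesis by simp
    qed
  qed
  also have "\<dots> = ennreal e * (\<integral>\<^sup>+t. \<integral>\<^sup>+x. \<integral>\<^sup>+v. F1 t x v \<partial>lborel \<partial>lborel \<partial>lborel)
      + ennreal (c * P) * (\<integral>\<^sup>+t. \<integral>\<^sup>+x. \<integral>\<^sup>+v. F2 t x v \<partial>lborel \<partial>lborel \<partial>lborel)"
    by (rule split3[OF m1 m2])
  also have "\<dots> = ennreal e * sq_txv {0..T} (phi \<delta> a b s g)
       + ennreal c * ennreal P * sq_txv {0..T} (phi \<delta> a' b' s g)"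
    unfolding sq_txv_eq F1_def F2_def using c0 by (simp add: ennreal_mult)
  finally show ?thesis unfolding c_def P_def .
qed


definition KK :: "(nat^3) set" where "KK = {a. \<forall>i. a $ i \<le> 11}"

lemma finite_KK: "finite KK"
proof -
  have "KK \<subseteq> vec_lambda ` (PiE UNIV (\<lambda>_. {..11::nat}))"
  proof
    fix a assume "a \<in> KK"
    then have "(\<lambda>i. a $ i) \<in> PiE UNIV (\<lambda>_. {..11::nat})" by (auto simp: KK_def PiE_def extensional_def)
    then show "a \<in> vec_lambda ` (PiE UNIV (\<lambda>_. {..11::nat}))"
      by (rule image_eqI[rotated]) simp
  qed
  moreover have "finite (vec_lambda ` (PiE UNIV (\<lambda>_. {..11::nat})) :: (nat^3) set)"
    by (intro finite_imageI finite_PiE) auto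
  ultimately show ?thesis by (rule finite_subset)
qed

definition N0 :: nat where "N0 = card (KK \<times> KK)"

lemma N0_pos: "0 < N0"
proof -
  have "(0, 0) \<in> KK \<times> KK" by (simp add: KK_def)
  then show ?thesis unfolding N0_def using finite_KK by (auto simp: card_gt_0_iff)
qed

lemma comp_le_mlen: "a $ i \<le> mlen a"
  unfolding mlen_def by (rule member_le_sum) auto

lemma I_sub:
  assumes "mlen a + mlen b + mlen s \<le> 10"
  shows "{(a', b'). mlen a' \<le> mlen a + 1 \<and> mlen b' + 1 \<le> mlen b} \<subseteq> KK \<times> KK"
proof
  fix p assume "p \<in> {(a', b'). mlen a' \<le> mlen a + 1 \<and> mlen b' + 1 \<le> mlen b}"
  then obtain a' b' where p: "p = (a', b')" "mlen a' \<le> mlen a + 1" "mlen b' + 1 \<le> mlen b" by auto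
  have "a' $ i \<le> 11" "b' $ i \<le> 11" for i
    using comp_le_mlen[of a' i] comp_le_mlen[of b' i] p assms by linarith+
  then show "p \<in> KK \<times> KK" using p by (auto simp: KK_def)
qed


lemma main_inst:
  fixes \<gamma> d0 :: real
  assumes eta: "0 < \<eta>"
    and len: "mlen a + mlen b + mlen s \<le> 10"
    and bs: "bootstrap \<gamma> d0 \<delta> \<epsilon>0 \<epsilon> fini Tb f"
    and T: "0 \<le> T" "T < Tb"
  shows "(let g = gfun d0 \<delta> f;
           Q = (\<lambda>a' b'. sq_txv {0..T}
                  (\<lambda>t x v. (1 + t) powr (- (1 + \<delta>) / 2) * jb v powr (1/2)
                           * W a' b' s t x v * Dop a' b' s g t x v))
       in (\<Sum>(a', b')\<in>{(a', b'). mlen a' \<le> mlen a + 1 \<and> mlen b' + 1 \<le> mlen b}.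
             L1_txv {0..T} (\<lambda>t x v. (W a b s t x v)\<^sup>2 * \<bar>Dop a b s g t x v\<bar> * \<bar>Dop a' b' s g t x v\<bar>))
          \<le> ennreal \<eta> * Q a b
             + ennreal (1 / (4 * (\<eta> / real N0))) * ennreal ((1 + T) powr (2 * (1 + \<delta>)))
               * (\<Sum>(a', b')\<in>{(a', b'). mlen a' \<le> mlen a + 1 \<and> mlen b' + 1 \<le> mlen b}. Q a' b'))"
proof -
  define g where "g = gfun d0 \<delta> f"
  define I where "I = {(a', b'). mlen a' \<le> mlen a + 1 \<and> mlen b' + 1 \<le> mlen b}"
  define e where "e = \<eta> / real N0"
  define P where "P = (1 + T) powr (2 * (1 + \<delta>))"
  have e0: "0 < e" unfolding e_def using eta N0_pos by simp
  have reg: "regular Tb f" and dl: "0 < \<delta>"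
    using bs unfolding bootstrap_def landau_solution_def by auto
  have gd: "good Tb (Dop a' b' s g)" for a' b'
    using SSi_Dop[OF SSi_gfun[OF reg], of a' b' s d0 \<delta>] unfolding SSi_def g_def
    using SS_good by blast
  have IK: "I \<subseteq> KK \<times> KK" unfolding I_def by (rule I_sub[OF len])
  have fI: "finite I" using IK finite_KK finite_subset by blast
  have cI: "card I \<le> N0" unfolding N0_def using IK finite_KK by (intro card_mono) auto
  have Qeq: "(\<lambda>t x v. (1 + t) powr (- (1 + \<delta>) / 2) * jb v powr (1/2) * W a' b' s t x v * Dop a' b' s g t x v)
       = phi \<delta> a' b' s g" for a' b'
    by (intro ext) (simp add: phi_def)
  have "(\<Sum>(a', b')\<in>I. L1_txv {0..T} (\<lambda>t x v. (W a b s t x v)\<^sup>2 * \<bar>Dop a b s g t x v\<bar> * \<bar>Dop a' b' s g t x v\<bar>))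
      \<le> (\<Sum>(a', b')\<in>I. ennreal e * sq_txv {0..T} (phi \<delta> a b s g)
            + ennreal (1 / (4 * e)) * ennreal P * sq_txv {0..T} (phi \<delta> a' b' s g))"
  proof (rule sum_mono)
    fix p assume "p \<in> I"
    then obtain a' b' where p: "p = (a', b')" "mlen a' \<le> mlen a + 1" "mlen b' + 1 \<le> mlen b"
      unfolding I_def by auto
    show "(case p of (a', b') \<Rightarrow> L1_txv {0..T} (\<lambda>t x v. (W a b s t x v)\<^sup>2 * \<bar>Dop a b s g t x v\<bar> * \<bar>Dop a' b' s g t x v\<bar>))
      \<le> (case p of (a', b') \<Rightarrow> ennreal e * sq_txv {0..T} (phi \<delta> a b s g)
            + ennreal (1 / (4 * e)) * ennreal P * sq_txv {0..T} (phi \<delta> a' b' s g))"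
      using core[OF gd gd p(2,3) e0 T dl] unfolding p(1) P_def by simp
  qed
  also have "\<dots> = of_nat (card I) * (ennreal e * sq_txv {0..T} (phi \<delta> a b s g))
      + ennreal (1 / (4 * e)) * ennreal P * (\<Sum>(a', b')\<in>I. sq_txv {0..T} (phi \<delta> a' b' s g))"
    by (simp add: sum.distrib sum_distrib_left case_prod_beta')
  also have "\<dots> \<le> ennreal \<eta> * sq_txv {0..T} (phi \<delta> a b s g)
      + ennreal (1 / (4 * e)) * ennreal P * (\<Sum>(a', b')\<in>I. sq_txv {0..T} (phi \<delta> a' b' s g))"
  proof -
    have "real (card I) * e \<le> real N0 * e" using cI e0 by (intro mult_right_mono) auto
    also have "\<dots> = \<eta>" unfolding e_def using N0_pos by simp
    finally have "ennreal (real (card I) * e) \<le> ennreal \<eta>" by (rule ennreal_leI)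
    then have "of_nat (card I) * ennreal e \<le> ennreal \<eta>"
      using e0 by (simp add: ennreal_mult ennreal_of_nat_eq_real_of_nat)
    then have "of_nat (card I) * (ennreal e * sq_txv {0..T} (phi \<delta> a b s g)) \<le> ennreal \<eta> * sq_txv {0..T} (phi \<delta> a b s g)"
      by (simp add: mult.assoc[symmetric] mult_right_mono)
    then show ?thesis by (rule add_right_mono)
  qed
  finally show ?thesis
    unfolding Let_def Qeq g_def[symmetric] I_def[symmetric] e_def[symmetric] P_def[symmetric] .
qed

theorem proposition7p2:
  fixes \<gamma> d0 :: real
  assumes "0 \<le> \<gamma>" and "\<gamma> < 1" and "0 < d0"
  shows "\<exists>\<epsilon>0>0. \<forall>\<eta>>0. \<exists>C>0.
    \<forall>a b s \<delta> \<epsilon> fini Tb f T.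
      mlen a + mlen b + mlen s \<le> 10 \<longrightarrow>
      bootstrap \<gamma> d0 \<delta> \<epsilon>0 \<epsilon> fini Tb f \<longrightarrow>
      0 \<le> T \<longrightarrow> T < Tb \<longrightarrow>
      (let g = gfun d0 \<delta> f;
           Q = (\<lambda>a' b'. sq_txv {0..T}
                  (\<lambda>t x v. (1 + t) powr (- (1 + \<delta>) / 2) * jb v powr (1/2)
                           * W a' b' s t x v * Dop a' b' s g t x v))
       in (\<Sum>(a', b')\<in>{(a', b'). mlen a' \<le> mlen a + 1 \<and> mlen b' + 1 \<le> mlen b}.
             L1_txv {0..T} (\<lambda>t x v. (W a b s t x v)\<^sup>2 * \<bar>Dop a b s g t x v\<bar> * \<bar>Dop a' b' s g t x v\<bar>))
          \<le> ennreal \<eta> * Q a b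
             + ennreal C * ennreal ((1 + T) powr (2 * (1 + \<delta>)))
               * (\<Sum>(a', b')\<in>{(a', b'). mlen a' \<le> mlen a + 1 \<and> mlen b' + 1 \<le> mlen b}. Q a' b'))"
proof (rule exI[of _ 1], intro conjI allI impI)
  show "(0::real) < 1" by simp
  fix \<eta> :: real assume eta: "0 < \<eta>"
  have Cpos: "0 < 1 / (4 * (\<eta> / real N0))" using eta N0_pos by simp
  show "\<exists>C>0. \<forall>a b s \<delta> \<epsilon> fini Tb f T.
      mlen a + mlen b + mlen s \<le> 10 \<longrightarrow>
      bootstrap \<gamma> d0 \<delta> 1 \<epsilon> fini Tb f \<longrightarrow>
      0 \<le> T \<longrightarrow> T < Tb \<longrightarrow>
      (let g = gfun d0 \<delta> f;
           Q = (\<lambda>a' b'. sq_txv {0..T}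
                  (\<lambda>t x v. (1 + t) powr (- (1 + \<delta>) / 2) * jb v powr (1/2)
                           * W a' b' s t x v * Dop a' b' s g t x v))
       in (\<Sum>(a', b')\<in>{(a', b'). mlen a' \<le> mlen a + 1 \<and> mlen b' + 1 \<le> mlen b}.
             L1_txv {0..T} (\<lambda>t x v. (W a b s t x v)\<^sup>2 * \<bar>Dop a b s g t x v\<bar> * \<bar>Dop a' b' s g t x v\<bar>))
          \<le> ennreal \<eta> * Q a b
             + ennreal C * ennreal ((1 + T) powr (2 * (1 + \<delta>)))
               * (\<Sum>(a', b')\<in>{(a', b'). mlen a' \<le> mlen a + 1 \<and> mlen b' + 1 \<le> mlen b}. Q a' b'))"
    using Cpos main_inst[OF eta] by blast
qed

end
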